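(* Let $G$ be a graph with finitely many vertices. Let $v\in G^0$ be a regular vertex that is not a source and that emits exactly one edge $f_0$, where $f_0$ is not a loop of length one (i.e. $r(f_0)\neq v$). Define a graph $E$ as follows: - $E^0=G^0\setminus\{v\}$; - $E^1=(G^1\setminus(r^{-1}(v)\cup s^{-1}(v)))\cup\{[ef_0]: e\in r^{-1}(v)\}$; - range and source maps extend those of $G$, with $r_E([ef_0])=r_G(f_0)$ and $s_E([ef_0])=s_G(e)$. Then $G\sim_M E$.
   Context: A graph $G=(G^0,G^1,r,s)$ has vertex set $G^0$, edge set $G^1$, and range/source maps; multiple edges and loops are allowed. A source receives no edges, a sink emits no edges, and an infinite emitter emits infinitely many edges. A vertex is singular if it is a sink or infinite emitter, and regular otherwise. A loop of length one is an edge $e$ with $s(e)=r(e)$. Move-equivalence $\sim_M$ is the smallest equivalence relation on graphs with finitely many vertices such that $G\sim_M E$ whenever $E$ is isomorphic to a graph obtained from $G$ by one of the following moves. (S) Delete a regular source together with the edges it emits. (R) For a regular vertex $u$ emitting exactly one edge $f$, with $r(f)\neq u$, and all of whose incoming edges have the same source $v$: delete $u$, $f$ and the edges into $u$, and add for each $e\in r^{-1}(u)$ an edge $[ef]$ from $v$ to $r(f)$. (O) Out-splitting at a non-sink $v$ along a partition $\mathcal E_1,\dots,\mathcal E_n$ of $s^{-1}(v)$ with at most one infinite part. Replace $v$ by $v^1,\dots,v^n$. Each edge $e$ into $v$ becomes copies $e^1,\dots,e^n$ with $r(e^i)=v^i$ and source $s(e)$, or source $v^j$ if $s(e)=v$ and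 $e\in\mathcal E_j$. An edge from $v$ to $w\neq v$ lying in $\mathcal E_i$ gets source $v^i$. (I) In-splitting at a regular non-source $v$ along a partition $\mathcal E_1,\dots,\mathcal E_n$ of $r^{-1}(v)$. Replace $v$ by $v^1,\dots,v^n$. Each edge $e$ out of $v$ becomes copies $e^1,\dots,e^n$ with $s(e^i)=v^i$ and range $r(e)$, or range $v^j$ if $r(e)=v$ and $e\in\mathcal E_j$. An edge into $v$ from $w\neq v$ lying in $\mathcal E_i$ gets range $v^i$. *)

theory Defs
  imports Main
begin

record ('v, 'e) dgraph =
  verts :: "'v set"
  edges :: "'e set"
  rng   :: "'e \<Rightarrow> 'v"
  src   :: "'e \<Rightarrow> 'v"

definition is_graph :: "('v, 'e) dgraph \<Rightarrow> bool" where
  "is_graph G \<longleftrightarrow> (\<forall>e \<in> edges G. src G e \<in> verts G \<and> rng G e \<in> verts G)"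

definition fin_graph :: "('v, 'e) dgraph \<Rightarrow> bool" where
  "fin_graph G \<longleftrightarrow> is_graph G \<and> finite (verts G)"

definition out_edges :: "('v, 'e) dgraph \<Rightarrow> 'v \<Rightarrow> 'e set" where
  "out_edges G v = {e \<in> edges G. src G e = v}"

definition in_edges :: "('v, 'e) dgraph \<Rightarrow> 'v \<Rightarrow> 'e set" where
  "in_edges G v = {e \<in> edges G. rng G e = v}"

definition is_source :: "('v, 'e) dgraph \<Rightarrow> 'v \<Rightarrow> bool" where
  "is_source G v \<longleftrightarrow> in_edges G v = {}"

definition is_sink :: "('v, 'e) dgraph \<Rightarrow> 'v \<Rightarrow> bool" where
  "is_sink G v \<longleftrightarrow> out_edges G v = {}"

definition regular :: "('v, 'e) dgraph \<Rightarrow> 'v \<Rightarrow> bool" where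
  "regular G v \<longleftrightarrow> out_edges G v \<noteq> {} \<and> finite (out_edges G v)"

definition graph_iso :: "('v, 'e) dgraph \<Rightarrow> ('w, 'f) dgraph \<Rightarrow> bool" where
  "graph_iso G H \<longleftrightarrow> (\<exists>\<phi> \<psi>. bij_betw \<phi> (verts G) (verts H) \<and> bij_betw \<psi> (edges G) (edges H) \<and>
     (\<forall>e \<in> edges G. rng H (\<psi> e) = \<phi> (rng G e) \<and> src H (\<psi> e) = \<phi> (src G e)))"

definition move_S :: "('v, 'e) dgraph \<Rightarrow> 'v \<Rightarrow> ('v, 'e) dgraph \<Rightarrow> bool" where
  "move_S G u M \<longleftrightarrow> u \<in> verts G \<and> regular G u \<and> is_source G u \<and>
     M = \<lparr>verts = verts G - {u}, edges = edges G - out_edges G u, rng = rng G, src = src G\<rparr>"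

text \<open>(R) Collapse a regular vertex u emitting exactly one edge f (not a loop) whose incoming
  edges all have the same source.  Kept edges are tagged Inl, new edges [e f] are tagged Inr e.\<close>
definition move_R :: "('v, 'e) dgraph \<Rightarrow> 'v \<Rightarrow> ('v, 'e + 'e) dgraph \<Rightarrow> bool" where
  "move_R G u M \<longleftrightarrow> (\<exists>f. u \<in> verts G \<and> regular G u \<and> out_edges G u = {f} \<and> rng G f \<noteq> u \<and>
     (\<exists>w. \<forall>e \<in> in_edges G u. src G e = w) \<and>
     M = \<lparr>verts = verts G - {u},
          edges = Inl ` (edges G - in_edges G u - {f}) \<union> Inr ` in_edges G u,
          rng = case_sum (rng G) (\<lambda>e. rng G f),
          src = case_sum (src G) (src G)\<rparr>)"

definition partition_fun :: "'e set \<Rightarrow> nat \<Rightarrow> ('e \<Rightarrow> nat) \<Rightarrow> bool" where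
  "partition_fun A n P \<longleftrightarrow> 0 < n \<and> (\<forall>e \<in> A. P e < n) \<and> (\<forall>i < n. \<exists>e \<in> A. P e = i)"

definition at_most_one_infinite_part :: "'e set \<Rightarrow> nat \<Rightarrow> ('e \<Rightarrow> nat) \<Rightarrow> bool" where
  "at_most_one_infinite_part A n P \<longleftrightarrow> card {i. i < n \<and> infinite {e \<in> A. P e = i}} \<le> 1"

text \<open>(O) Out-splitting at a non-sink v.  Vertex w \<noteq> v becomes (w,0), v becomes v^i = (v,i);
  an edge e not into v becomes (e,0), an edge e into v becomes copies e^i = (e,i), i < n.\<close>
definition move_O :: "('v, 'e) dgraph \<Rightarrow> 'v \<Rightarrow> nat \<Rightarrow> ('e \<Rightarrow> nat) \<Rightarrow> ('v \<times> nat, 'e \<times> nat) dgraph \<Rightarrow> bool" where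
  "move_O G v n P M \<longleftrightarrow> v \<in> verts G \<and> \<not> is_sink G v \<and>
     partition_fun (out_edges G v) n P \<and> at_most_one_infinite_part (out_edges G v) n P \<and>
     M = \<lparr>verts = (\<lambda>w. (w, 0)) ` (verts G - {v}) \<union> (\<lambda>i. (v, i)) ` {..<n},
          edges = (\<lambda>e. (e, 0)) ` {e \<in> edges G. rng G e \<noteq> v} \<union>
                  {(e, i) | e i. e \<in> edges G \<and> rng G e = v \<and> i < n},
          rng = (\<lambda>(e, i). if rng G e = v then (v, i) else (rng G e, 0)),
          src = (\<lambda>(e, i). if src G e = v then (v, P e) else (src G e, 0))\<rparr>"

text \<open>(I) In-splitting at a regular non-source v.  Vertex w \<noteq> v becomes (w,0), v becomes
  v^i = (v,i); an edge e not out of v becomes (e,0), an edge e out of v becomes copies (e,i).\<close>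
definition move_I :: "('v, 'e) dgraph \<Rightarrow> 'v \<Rightarrow> nat \<Rightarrow> ('e \<Rightarrow> nat) \<Rightarrow> ('v \<times> nat, 'e \<times> nat) dgraph \<Rightarrow> bool" where
  "move_I G v n P M \<longleftrightarrow> v \<in> verts G \<and> regular G v \<and> \<not> is_source G v \<and>
     partition_fun (in_edges G v) n P \<and>
     M = \<lparr>verts = (\<lambda>w. (w, 0)) ` (verts G - {v}) \<union> (\<lambda>i. (v, i)) ` {..<n},
          edges = (\<lambda>e. (e, 0)) ` {e \<in> edges G. src G e \<noteq> v} \<union>
                  {(e, i) | e i. e \<in> edges G \<and> src G e = v \<and> i < n},
          rng = (\<lambda>(e, i). if rng G e = v then (v, P e) else (rng G e, 0)),
          src = (\<lambda>(e, i). if src G e = v then (v, i) else (src G e, 0))\<rparr>"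

definition move_step :: "('v, 'e) dgraph \<Rightarrow> ('v, 'e) dgraph \<Rightarrow> bool" where
  "move_step G H \<longleftrightarrow> fin_graph G \<and> fin_graph H \<and>
     ((\<exists>u M. move_S G u M \<and> graph_iso M H) \<or>
      (\<exists>u M. move_R G u M \<and> graph_iso M H) \<or>
      (\<exists>v n P M. move_O G v n P M \<and> graph_iso M H) \<or>
      (\<exists>v n P M. move_I G v n P M \<and> graph_iso M H))"

definition move_equiv :: "('v, 'e) dgraph \<Rightarrow> ('v, 'e) dgraph \<Rightarrow> bool" where
  "move_equiv G H \<longleftrightarrow> fin_graph G \<and> fin_graph H \<and> (sup move_step move_step\<inverse>\<inverse>)\<^sup>*\<^sup>* G H"

end

theory Submission
  imports Defs
begin


definition Rcol :: "('v,'e) dgraph \<Rightarrow> 'v \<Rightarrow> 'e \<Rightarrow> ('v,'e+'e) dgraph" where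
  "Rcol G u f = \<lparr>verts = verts G - {u},
          edges = Inl ` (edges G - in_edges G u - {f}) \<union> Inr ` in_edges G u,
          rng = case_sum (rng G) (\<lambda>e. rng G f),
          src = case_sum (src G) (src G)\<rparr>"

definition isoby :: "('v, 'e) dgraph \<Rightarrow> ('w, 'f) dgraph \<Rightarrow> ('v \<Rightarrow> 'w) \<Rightarrow> ('e \<Rightarrow> 'f) \<Rightarrow> bool" where
  "isoby G H \<phi> \<psi> \<longleftrightarrow> bij_betw \<phi> (verts G) (verts H) \<and> bij_betw \<psi> (edges G) (edges H) \<and>
     (\<forall>e \<in> edges G. rng H (\<psi> e) = \<phi> (rng G e) \<and> src H (\<psi> e) = \<phi> (src G e))"

definition imgG :: "('a \<Rightarrow> 'v) \<Rightarrow> ('b \<Rightarrow> 'e) \<Rightarrow> ('a,'b) dgraph \<Rightarrow> ('v,'e) dgraph" where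
  "imgG \<phi> \<psi> M = \<lparr>verts = \<phi> ` verts M, edges = \<psi> ` edges M,
      rng = \<lambda>e. \<phi> (rng M (inv \<psi> e)), src = \<lambda>e. \<phi> (src M (inv \<psi> e))\<rparr>"

definition Ghyp :: "('v,'e) dgraph \<Rightarrow> 'v \<Rightarrow> 'e \<Rightarrow> bool" where
  "Ghyp G v f \<longleftrightarrow> is_graph G \<and> finite (verts G) \<and> v \<in> verts G \<and> \<not> is_source G v \<and>
     out_edges G v = {f} \<and> rng G f \<noteq> v"

lemma graph_iso_iff: "graph_iso G H \<longleftrightarrow> (\<exists>\<phi> \<psi>. isoby G H \<phi> \<psi>)"
  unfolding graph_iso_def isoby_def by blast

lemma isoby_trans: "isoby G H \<phi> \<psi> \<Longrightarrow> isoby H K \<phi>' \<psi>' \<Longrightarrow> isoby G K (\<phi>' \<circ> \<phi>) (\<psi>' \<circ> \<psi>)"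
  unfolding isoby_def
  apply (intro conjI)
    apply (blast intro: bij_betw_trans)
   apply (blast intro: bij_betw_trans)
  apply (simp add: bij_betw_def)
  apply (metis image_eqI)
  done

lemma isoby_sym: "isoby G H \<phi> \<psi> \<Longrightarrow> is_graph G \<Longrightarrow> isoby H G (inv_into (verts G) \<phi>) (inv_into (edges G) \<psi>)"
  unfolding isoby_def is_graph_def
proof (intro conjI ballI)
  assume a: "bij_betw \<phi> (verts G) (verts H) \<and> bij_betw \<psi> (edges G) (edges H) \<and>
     (\<forall>e \<in> edges G. rng H (\<psi> e) = \<phi> (rng G e) \<and> src H (\<psi> e) = \<phi> (src G e))"
    and g: "\<forall>e\<in>edges G. src G e \<in> verts G \<and> rng G e \<in> verts G"
  show "bij_betw (inv_into (verts G) \<phi>) (verts H) (verts G)" using a bij_betw_inv_into by blast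
  show "bij_betw (inv_into (edges G) \<psi>) (edges H) (edges G)" using a bij_betw_inv_into by blast
  fix e assume e: "e \<in> edges H"
  define e' where "e' = inv_into (edges G) \<psi> e"
  have e': "e' \<in> edges G" "\<psi> e' = e" using a e unfolding e'_def bij_betw_def
    by (auto intro: inv_into_into f_inv_into_f)
  have i: "inj_on \<phi> (verts G)" using a bij_betw_def by blast
  show "rng G (inv_into (edges G) \<psi> e) = inv_into (verts G) \<phi> (rng H e)"
    using e' a g i by (metis e'_def inv_into_f_f)
  show "src G (inv_into (edges G) \<psi> e) = inv_into (verts G) \<phi> (src H e)"
    using e' a g i by (metis e'_def inv_into_f_f)
qed

lemma graph_iso_trans: "graph_iso G H \<Longrightarrow> graph_iso H K \<Longrightarrow> graph_iso G K"
  unfolding graph_iso_iff using isoby_trans by blast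

lemma graph_iso_sym: "graph_iso G H \<Longrightarrow> is_graph G \<Longrightarrow> graph_iso H G"
  unfolding graph_iso_iff using isoby_sym by blast

lemma isoby_in_edges:
  assumes "isoby G H \<phi> \<psi>" "is_graph G" "u \<in> verts G"
  shows "in_edges H (\<phi> u) = \<psi> ` in_edges G u"
proof
  show "\<psi> ` in_edges G u \<subseteq> in_edges H (\<phi> u)" using assms
    unfolding isoby_def in_edges_def bij_betw_def by auto
  show "in_edges H (\<phi> u) \<subseteq> \<psi> ` in_edges G u"
  proof
    fix x assume x: "x \<in> in_edges H (\<phi> u)"
    have "x \<in> \<psi> ` edges G" using x assms unfolding isoby_def in_edges_def bij_betw_def by auto
    then obtain e where e: "e \<in> edges G" "x = \<psi> e" by blast
    have "\<phi> (rng G e) = \<phi> u" using x e assms unfolding isoby_def in_edges_def by auto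
    hence "rng G e = u" using assms e unfolding isoby_def is_graph_def bij_betw_def inj_on_def by blast
    thus "x \<in> \<psi> ` in_edges G u" using e unfolding in_edges_def by auto
  qed
qed

lemma isoby_out_edges:
  assumes "isoby G H \<phi> \<psi>" "is_graph G" "u \<in> verts G"
  shows "out_edges H (\<phi> u) = \<psi> ` out_edges G u"
proof
  show "\<psi> ` out_edges G u \<subseteq> out_edges H (\<phi> u)" using assms
    unfolding isoby_def out_edges_def bij_betw_def by auto
  show "out_edges H (\<phi> u) \<subseteq> \<psi> ` out_edges G u"
  proof
    fix x assume x: "x \<in> out_edges H (\<phi> u)"
    have "x \<in> \<psi> ` edges G" using x assms unfolding isoby_def out_edges_def bij_betw_def by auto
    then obtain e where e: "e \<in> edges G" "x = \<psi> e" by blast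
    have "\<phi> (src G e) = \<phi> u" using x e assms unfolding isoby_def out_edges_def by auto
    hence "src G e = u" using assms e unfolding isoby_def is_graph_def bij_betw_def inj_on_def by blast
    thus "x \<in> \<psi> ` out_edges G u" using e unfolding out_edges_def by auto
  qed
qed

lemma isoby_is_graph: assumes "isoby G H \<phi> \<psi>" "is_graph G" shows "is_graph H"
  unfolding is_graph_def
proof
  fix x assume "x \<in> edges H"
  hence "x \<in> \<psi> ` edges G" using assms unfolding isoby_def bij_betw_def by auto
  then obtain e where e: "e \<in> edges G" "x = \<psi> e" by blast
  thus "src H x \<in> verts H \<and> rng H x \<in> verts H" using assms unfolding isoby_def bij_betw_def is_graph_def by auto
qed

lemma isoby_fin_graph: assumes "isoby G H \<phi> \<psi>" "fin_graph G" shows "fin_graph H"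
proof -
  have "is_graph H" using isoby_is_graph assms unfolding fin_graph_def by blast
  moreover have "verts H = \<phi> ` verts G" using assms(1) unfolding isoby_def bij_betw_def by auto
  ultimately show ?thesis using assms(2) unfolding fin_graph_def by auto
qed

lemma isoby_sources:
  assumes "isoby G H \<phi> \<psi>" "is_graph G" "u \<in> verts G"
  shows "src H ` in_edges H (\<phi> u) = \<phi> ` src G ` in_edges G u"
proof -
  have "\<forall>e\<in>in_edges G u. src H (\<psi> e) = \<phi> (src G e)" using assms(1) unfolding isoby_def in_edges_def by auto
  hence "src H ` \<psi> ` in_edges G u = \<phi> ` src G ` in_edges G u" unfolding image_image using image_cong by (metis (no_types, lifting))
  thus ?thesis using isoby_in_edges[OF assms] by simp
qed

lemma isoby_card_sources:
  assumes "isoby G H \<phi> \<psi>" "is_graph G" "u \<in> verts G"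
  shows "card (src H ` in_edges H (\<phi> u)) = card (src G ` in_edges G u)"
proof -
  have "src G ` in_edges G u \<subseteq> verts G" using assms(2) unfolding is_graph_def in_edges_def by auto
  moreover have "inj_on \<phi> (verts G)" using assms(1) unfolding isoby_def bij_betw_def by auto
  ultimately show ?thesis using isoby_sources[OF assms] by (metis card_image inj_on_subset)
qed

lemma isoby_Ghyp:
  assumes "isoby G H \<phi> \<psi>" "Ghyp G v f"
  shows "Ghyp H (\<phi> v) (\<psi> f)"
proof -
  have g: "is_graph G" "v \<in> verts G" using assms(2) unfolding Ghyp_def by auto
  have f: "f \<in> edges G" using assms(2) unfolding Ghyp_def out_edges_def by auto
  have i: "in_edges H (\<phi> v) = \<psi> ` in_edges G v" by (rule isoby_in_edges[OF assms(1) g])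
  have o: "out_edges H (\<phi> v) = \<psi> ` out_edges G v" by (rule isoby_out_edges[OF assms(1) g])
  have ig: "is_graph H" by (rule isoby_is_graph[OF assms(1) g(1)])
  have fv: "finite (verts H)" using assms bij_betw_finite unfolding Ghyp_def isoby_def by blast
  have vv: "\<phi> v \<in> verts H" using assms g unfolding isoby_def bij_betw_def by auto
  have rf: "rng H (\<psi> f) = \<phi> (rng G f)" using assms(1) f unfolding isoby_def by auto
  have "rng G f \<in> verts G" using g f unfolding is_graph_def by auto
  hence "\<phi> (rng G f) \<noteq> \<phi> v" using assms g unfolding isoby_def bij_betw_def inj_on_def Ghyp_def by metis
  thus ?thesis using assms(2) i o ig fv vv rf unfolding Ghyp_def is_source_def by auto
qed



lemma imgG_iso:
  assumes "fin_graph M" "inj \<phi>" "inj \<psi>"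
  shows "isoby M (imgG \<phi> \<psi> M) \<phi> \<psi>" "fin_graph (imgG \<phi> \<psi> M)"
proof -
  show i: "isoby M (imgG \<phi> \<psi> M) \<phi> \<psi>" unfolding isoby_def imgG_def using assms
    by (auto simp: bij_betw_def inj_on_def)
  show "fin_graph (imgG \<phi> \<psi> M)" by (rule isoby_fin_graph[OF i assms(1)])
qed

lemma bij_betw_map_sum:
  assumes "bij_betw f A A'" "bij_betw g B B'"
  shows "bij_betw (map_sum f g) (Inl ` A \<union> Inr ` B) (Inl ` A' \<union> Inr ` B')"
proof -
  have i: "inj_on f A" "inj_on g B" "f ` A = A'" "g ` B = B'" using assms unfolding bij_betw_def by auto
  have "inj_on (map_sum f g) (Inl ` A \<union> Inr ` B)"
    unfolding inj_on_def
  proof (intro ballI impI)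
    fix x y assume x: "x \<in> Inl ` A \<union> Inr ` B" and y: "y \<in> Inl ` A \<union> Inr ` B"
      and e: "map_sum f g x = map_sum f g y"
    from x y e show "x = y"
      by (elim UnE imageE) (simp_all add: inj_on_eq_iff[OF i(1)] inj_on_eq_iff[OF i(2)])
  qed
  moreover have "map_sum f g ` (Inl ` A \<union> Inr ` B) = Inl ` A' \<union> Inr ` B'"
    unfolding i(3)[symmetric] i(4)[symmetric] by (simp add: image_Un image_image)
  ultimately show ?thesis unfolding bij_betw_def by blast
qed

lemma Rcol_iso:
  assumes "isoby G H \<phi> \<psi>" "is_graph G" "u \<in> verts G" "f \<in> edges G"
  shows "isoby (Rcol G u f) (Rcol H (\<phi> u) (\<psi> f)) \<phi> (map_sum \<psi> \<psi>)"
proof -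
  have bv: "bij_betw \<phi> (verts G) (verts H)" and be: "bij_betw \<psi> (edges G) (edges H)"
    using assms(1) unfolding isoby_def by auto
  have ie: "in_edges H (\<phi> u) = \<psi> ` in_edges G u" by (rule isoby_in_edges[OF assms(1-3)])
  have sub: "in_edges G u \<subseteq> edges G" unfolding in_edges_def by auto
  have iv: "inj_on \<phi> (verts G)" "\<phi> ` verts G = verts H" using bv unfolding bij_betw_def by auto
  have "\<phi> ` (verts G - {u}) = \<phi> ` verts G - \<phi> ` {u}"
    by (rule inj_on_image_set_diff[OF iv(1)]) (use assms(3) in auto)
  hence b1: "bij_betw \<phi> (verts G - {u}) (verts H - {\<phi> u})"
    using iv by (simp add: bij_betw_def inj_on_diff)
  have b2: "bij_betw \<psi> (edges G - in_edges G u - {f}) (edges H - in_edges H (\<phi> u) - {\<psi> f})"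
  proof -
    have ie2: "inj_on \<psi> (edges G)" "\<psi> ` edges G = edges H" using be unfolding bij_betw_def by auto
    have "\<psi> ` (edges G - in_edges G u - {f}) = edges H - \<psi> ` in_edges G u - {\<psi> f}"
    proof (intro equalityI subsetI)
      fix y assume "y \<in> \<psi> ` (edges G - in_edges G u - {f})"
      then obtain x where x: "x \<in> edges G" "x \<notin> in_edges G u" "x \<noteq> f" "y = \<psi> x" by blast
      have "\<psi> x \<notin> \<psi> ` in_edges G u" using inj_on_image_mem_iff[OF ie2(1) x(1) sub] x(2) by blast
      moreover have "\<psi> x \<noteq> \<psi> f" using inj_on_eq_iff[OF ie2(1) x(1) assms(4)] x(3) by blast
      moreover have "\<psi> x \<in> edges H" using ie2(2) x(1) by blast
      ultimately show "y \<in> edges H - \<psi> ` in_edges G u - {\<psi> f}" unfolding x(4) by blast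
    next
      fix y assume y: "y \<in> edges H - \<psi> ` in_edges G u - {\<psi> f}"
      then obtain x where x: "x \<in> edges G" "y = \<psi> x" using ie2(2) by blast
      thus "y \<in> \<psi> ` (edges G - in_edges G u - {f})" using y unfolding x(2) by blast
    qed
    moreover have "inj_on \<psi> (edges G - in_edges G u - {f})" by (rule inj_on_subset[OF ie2(1)]) blast
    ultimately show ?thesis unfolding bij_betw_def ie by blast
  qed
  have b3: "bij_betw \<psi> (in_edges G u) (in_edges H (\<phi> u))"
    by (rule bij_betw_subset[OF be sub ie[symmetric]])
  have e: "\<forall>e\<in>edges G. rng H (\<psi> e) = \<phi> (rng G e) \<and> src H (\<psi> e) = \<phi> (src G e)"
    using assms(1) unfolding isoby_def by blast
  have "\<forall>x\<in>edges (Rcol G u f). rng (Rcol H (\<phi> u) (\<psi> f)) (map_sum \<psi> \<psi> x) = \<phi> (rng (Rcol G u f) x) \<and>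
       src (Rcol H (\<phi> u) (\<psi> f)) (map_sum \<psi> \<psi> x) = \<phi> (src (Rcol G u f) x)"
  proof
    fix x assume x: "x \<in> edges (Rcol G u f)"
    show "rng (Rcol H (\<phi> u) (\<psi> f)) (map_sum \<psi> \<psi> x) = \<phi> (rng (Rcol G u f) x) \<and>
       src (Rcol H (\<phi> u) (\<psi> f)) (map_sum \<psi> \<psi> x) = \<phi> (src (Rcol G u f) x)"
    proof (cases x)
      case (Inl a)
      hence "a \<in> edges G" using x unfolding Rcol_def by auto
      thus ?thesis using e Inl unfolding Rcol_def by simp
    next
      case (Inr a)
      hence "a \<in> edges G" using x sub unfolding Rcol_def by auto
      thus ?thesis using e Inr assms(4) unfolding Rcol_def by simp
    qed
  qed
  moreover have "bij_betw \<phi> (verts (Rcol G u f)) (verts (Rcol H (\<phi> u) (\<psi> f)))"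
    using b1 unfolding Rcol_def by simp
  moreover have "bij_betw (map_sum \<psi> \<psi>) (edges (Rcol G u f)) (edges (Rcol H (\<phi> u) (\<psi> f)))"
    using bij_betw_map_sum[OF b2 b3] unfolding Rcol_def by simp
  ultimately show ?thesis unfolding isoby_def by blast
qed

lemma Ghyp_basic:
  assumes "Ghyp G v f"
  shows "is_graph G" "finite (verts G)" "v \<in> verts G" "f \<in> edges G" "src G f = v" "rng G f \<noteq> v"
    "in_edges G v \<noteq> {}" "\<And>e. e \<in> in_edges G v \<Longrightarrow> src G e \<noteq> v"
    "\<And>e. e \<in> edges G \<Longrightarrow> src G e = v \<longleftrightarrow> e = f"
    "finite (src G ` in_edges G v)" "src G ` in_edges G v \<subseteq> verts G"
proof -
  show "is_graph G" "finite (verts G)" "v \<in> verts G" "rng G f \<noteq> v" "in_edges G v \<noteq> {}"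
    using assms unfolding Ghyp_def is_source_def by auto
  have o: "out_edges G v = {f}" using assms unfolding Ghyp_def by auto
  thus "f \<in> edges G" "src G f = v" unfolding out_edges_def by auto
  show "\<And>e. e \<in> edges G \<Longrightarrow> src G e = v \<longleftrightarrow> e = f" using o unfolding out_edges_def by auto
  show "\<And>e. e \<in> in_edges G v \<Longrightarrow> src G e \<noteq> v" using o assms unfolding out_edges_def in_edges_def Ghyp_def
    by auto
  show s: "src G ` in_edges G v \<subseteq> verts G" using assms unfolding Ghyp_def is_graph_def in_edges_def by auto
  show "finite (src G ` in_edges G v)" using s assms unfolding Ghyp_def by (auto intro: finite_subset)
qed

lemma Rcol_fin:
  assumes "Ghyp G v f"
  shows "fin_graph (Rcol G v f)"
  using Ghyp_basic[OF assms] unfolding fin_graph_def is_graph_def Rcol_def in_edges_def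
  by (auto simp: is_graph_def)

lemma Rcol_move:
  assumes "Ghyp G v f" "card (src G ` in_edges G v) = 1"
  shows "move_R G v (Rcol G v f)"
proof -
  obtain w where w: "src G ` in_edges G v = {w}" using assms(2) card_1_singletonE by blast
  have "regular G v" using assms unfolding Ghyp_def regular_def by auto
  moreover have "\<forall>e \<in> in_edges G v. src G e = w" using w by auto
  ultimately show ?thesis unfolding move_R_def using assms(1) unfolding Ghyp_def
    by (intro exI[of _ f]) (auto simp only: Rcol_def)
qed



definition insplit :: "('v,'e) dgraph \<Rightarrow> 'v \<Rightarrow> ('e \<Rightarrow> nat) \<Rightarrow> ('v \<times> nat, 'e \<times> nat) dgraph" where
  "insplit G v P = \<lparr>verts = (\<lambda>w. (w, 0)) ` (verts G - {v}) \<union> (\<lambda>i. (v, i)) ` {..<2},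
          edges = (\<lambda>e. (e, 0)) ` {e \<in> edges G. src G e \<noteq> v} \<union>
                  {(e, i) | e i. e \<in> edges G \<and> src G e = v \<and> i < 2},
          rng = (\<lambda>(e, i). if rng G e = v then (v, P e) else (rng G e, 0)),
          src = (\<lambda>(e, i). if src G e = v then (v, i) else (src G e, 0))\<rparr>"

context
  fixes G :: "('v,'e) dgraph" and v f0 w
  assumes gh: "Ghyp G v f0" and wS: "w \<in> src G ` in_edges G v" and c2: "card (src G ` in_edges G v) \<ge> 2"
begin

abbreviation "P \<equiv> (\<lambda>e. if src G e = w then 0 else 1::nat)"
abbreviation "M1 \<equiv> insplit G v P"
abbreviation "Iw \<equiv> {e \<in> in_edges G v. src G e = w}"
abbreviation "Inw \<equiv> {e \<in> in_edges G v. src G e \<noteq> w}"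

lemma wv: "w \<noteq> v" "w \<in> verts G"
  using wS Ghyp_basic(8)[OF gh] Ghyp_basic(11)[OF gh] by auto

lemma Inw_ne: "Inw \<noteq> {}"
proof
  assume "Inw = {}"
  hence "src G ` in_edges G v \<subseteq> {w}" by auto
  hence "card (src G ` in_edges G v) \<le> card {w}" by (intro card_mono) auto
  hence "card (src G ` in_edges G v) \<le> 1" by simp
  thus False using c2 by simp
qed

lemma Iw_ne: "Iw \<noteq> {}" using wS by auto

lemma M1_edges: "edges M1 = (\<lambda>e. (e,0)) ` edges G \<union> {(f0,1)}"
  using Ghyp_basic[OF gh] unfolding insplit_def by (auto simp: less_2_cases_iff image_iff)

lemma M1_in0: "in_edges M1 (v,0) = (\<lambda>e. (e,0)) ` Iw"
  using Ghyp_basic[OF gh] unfolding in_edges_def M1_edges by (auto simp: insplit_def split: if_splits)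

lemma M1_out0: "out_edges M1 (v,0) = {(f0,0)}"
  using Ghyp_basic[OF gh] unfolding out_edges_def M1_edges by (auto simp: insplit_def split: if_splits)

lemma M1_Ghyp: "Ghyp M1 (v,0) (f0,0)"
proof -
  have ig: "is_graph M1" using Ghyp_basic[OF gh] unfolding is_graph_def M1_edges
    by (auto simp: insplit_def is_graph_def)
  show ?thesis unfolding Ghyp_def is_source_def using ig M1_in0 M1_out0 Iw_ne Ghyp_basic[OF gh]
    by (auto simp: insplit_def)
qed

lemma M1_fin: "fin_graph M1" using M1_Ghyp unfolding Ghyp_def fin_graph_def by auto

lemma M1_card: "card (src M1 ` in_edges M1 (v,0)) = 1"
proof -
  have a: "\<forall>e \<in> Iw. src M1 (e,0) = (w,0)" using Ghyp_basic(8)[OF gh] by (auto simp: insplit_def)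
  obtain e0 where e0: "e0 \<in> Iw" using Iw_ne by blast
  have "src M1 ` in_edges M1 (v,0) = {(w,0)}" unfolding M1_in0
  proof (intro equalityI subsetI)
    fix y assume "y \<in> src M1 ` (\<lambda>e. (e, 0)) ` Iw"
    thus "y \<in> {(w,0)}" using a by auto
  next
    fix y assume "y \<in> {(w,0::nat)}"
    hence "y = src M1 (e0,0)" using a e0 by auto
    thus "y \<in> src M1 ` (\<lambda>e. (e, 0)) ` Iw" using e0 by blast
  qed
  thus ?thesis by simp
qed

lemma M1_move: "move_I G v 2 P M1"
proof -
  have "in_edges G v \<noteq> {}" using Ghyp_basic[OF gh] by auto
  have pf: "partition_fun (in_edges G v) 2 P" unfolding partition_fun_def
  proof (intro conjI allI impI)
    fix i :: nat assume "i < 2"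
    then consider "i = 0" | "i = 1" by linarith
    thus "\<exists>e\<in>in_edges G v. P e = i" using Iw_ne Inw_ne by cases auto
  qed auto
  show ?thesis unfolding move_I_def using pf gh unfolding Ghyp_def regular_def
    by (auto simp: insplit_def)
qed

abbreviation "M2 \<equiv> Rcol M1 (v,0) (f0,0)"

lemma M2_edges: "edges M2 = Inl ` ((\<lambda>e. (e,0)) ` (edges G - {f0} - Iw) \<union> {(f0,1)}) \<union> Inr ` (\<lambda>e. (e,0)) ` Iw"
  unfolding Rcol_def M1_in0 M1_edges by auto

lemma M2_in1: "in_edges M2 (v,1) = Inl ` (\<lambda>e. (e,0)) ` Inw"
  using Ghyp_basic[OF gh] unfolding in_edges_def M2_edges
  by (auto simp: Rcol_def insplit_def split: if_splits)

lemma M2_out1: "out_edges M2 (v,1) = {Inl (f0,1)}"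
  using Ghyp_basic[OF gh] wv unfolding out_edges_def M2_edges
  by (auto simp: Rcol_def insplit_def split: if_splits)

lemma M2_Ghyp: "Ghyp M2 (v,1) (Inl (f0,1))"
proof -
  have ig: "is_graph M2" using Rcol_fin[OF M1_Ghyp] unfolding fin_graph_def by auto
  show ?thesis unfolding Ghyp_def is_source_def using ig M2_in1 M2_out1 Inw_ne Ghyp_basic[OF gh]
    by (auto simp: insplit_def Rcol_def)
qed

lemma M2_card: "card (src M2 ` in_edges M2 (v,1)) = card (src G ` in_edges G v) - 1"
proof -
  have a: "\<forall>e \<in> Inw. src M2 (Inl (e,0)) = (\<lambda>u. (u,0)) (src G e)"
    using Ghyp_basic(8)[OF gh] by (auto simp: insplit_def Rcol_def)
  have "src M2 ` in_edges M2 (v,1) = (\<lambda>e. src M2 (Inl (e,0))) ` Inw" unfolding M2_in1 image_image ..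
  also have "\<dots> = (\<lambda>e. (\<lambda>u. (u,0)) (src G e)) ` Inw" using a by (intro image_cong) simp_all
  also have "\<dots> = (\<lambda>u. (u,0)) ` (src G ` Inw)" by (simp only: image_image)
  also have "src G ` Inw = src G ` in_edges G v - {w}" by blast
  finally have "src M2 ` in_edges M2 (v,1) = (\<lambda>u. (u,0)) ` (src G ` in_edges G v - {w})" .
  moreover have "card ((\<lambda>u. (u,0::nat)) ` (src G ` in_edges G v - {w})) = card (src G ` in_edges G v - {w})"
    by (rule card_image) (auto simp: inj_on_def)
  ultimately show ?thesis using wS Ghyp_basic[OF gh] by simp
qed

definition psiF :: "(('e \<times> nat) + ('e \<times> nat)) + (('e \<times> nat) + ('e \<times> nat)) \<Rightarrow> 'e + 'e" where
  "psiF = case_sum (case_sum (\<lambda>p. Inl (fst p)) (\<lambda>p. Inr (fst p))) (\<lambda>q. Inr (fst (case_sum id id q)))"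

definition psiB :: "'e + 'e \<Rightarrow> (('e \<times> nat) + ('e \<times> nat)) + (('e \<times> nat) + ('e \<times> nat))" where
  "psiB = case_sum (\<lambda>e. Inl (Inl (e,0))) (\<lambda>e. if src G e = w then Inl (Inr (e,0)) else Inr (Inl (e,0)))"

lemma final_iso: "isoby (Rcol M2 (v,1) (Inl (f0,1))) (Rcol G v f0) fst psiF"
proof -
  let ?K = "edges G - in_edges G v - {f0}"
  have key: "edges G - {f0} - Iw = ?K \<union> Inw" using Ghyp_basic(4,6)[OF gh] unfolding in_edges_def by blast
  have d1: "edges M2 - in_edges M2 (v,1) - {Inl (f0,1)} = Inl ` (\<lambda>e. (e,0)) ` ?K \<union> Inr ` (\<lambda>e. (e,0)) ` Iw"
    unfolding M2_edges M2_in1 key by (auto simp: in_edges_def)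
  have eL: "edges (Rcol M2 (v,1) (Inl (f0,1))) = Inl ` (Inl ` (\<lambda>e. (e,0)) ` ?K \<union> Inr ` (\<lambda>e. (e,0)) ` Iw) \<union> Inr ` Inl ` (\<lambda>e. (e,0)) ` Inw"
    unfolding d1[symmetric] M2_in1[symmetric] by (simp add: Rcol_def)
  have eR: "edges (Rcol G v f0) = Inl ` ?K \<union> Inr ` in_edges G v" unfolding Rcol_def by auto
  have be: "bij_betw psiF (edges (Rcol M2 (v,1) (Inl (f0,1)))) (edges (Rcol G v f0))"
    unfolding eL eR
    apply (rule bij_betw_byWitness[where f'=psiB])
    unfolding psiF_def psiB_def using Ghyp_basic[OF gh] by (auto simp: in_edges_def)
  have bv: "bij_betw fst (verts (Rcol M2 (v,1) (Inl (f0,1)))) (verts (Rcol G v f0))"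
  proof -
    have "verts (Rcol M2 (v,1) (Inl (f0,1))) = (\<lambda>w. (w,0::nat)) ` (verts G - {v})"
      by (auto simp: Rcol_def insplit_def less_2_cases_iff)
    moreover have "verts (Rcol G v f0) = verts G - {v}" by (simp add: Rcol_def)
    moreover have "bij_betw fst ((\<lambda>w. (w,0::nat)) ` (verts G - {v})) (verts G - {v})"
      unfolding bij_betw_def inj_on_def by (auto simp: image_image)
    ultimately show ?thesis by simp
  qed
  have fK: "\<And>e. e \<in> ?K \<Longrightarrow> rng G e \<noteq> v \<and> src G e \<noteq> v"
    using Ghyp_basic(9)[OF gh] unfolding in_edges_def by auto
  have fI: "\<And>e. e \<in> in_edges G v \<Longrightarrow> rng G e = v \<and> src G e \<noteq> v"
    using Ghyp_basic(8)[OF gh] unfolding in_edges_def by auto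
  have f0: "rng G f0 \<noteq> v" "src G f0 = v" using Ghyp_basic[OF gh] by auto
  have ek: "\<forall>x\<in>edges (Rcol M2 (v,1) (Inl (f0,1))). rng (Rcol G v f0) (psiF x) = fst (rng (Rcol M2 (v,1) (Inl (f0,1))) x) \<and>
       src (Rcol G v f0) (psiF x) = fst (src (Rcol M2 (v,1) (Inl (f0,1))) x)"
  proof
    fix x assume "x \<in> edges (Rcol M2 (v,1) (Inl (f0,1)))"
    hence "x \<in> Inl ` (Inl ` (\<lambda>e. (e,0)) ` ?K \<union> Inr ` (\<lambda>e. (e,0)) ` Iw) \<union> Inr ` Inl ` (\<lambda>e. (e,0)) ` Inw"
      by (simp only: eL)
    then consider (a) e where "e \<in> ?K" "x = Inl (Inl (e,0))"
      | (b) e where "e \<in> Iw" "x = Inl (Inr (e,0))"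
      | (c) e where "e \<in> Inw" "x = Inr (Inl (e,0))" by blast
    thus "rng (Rcol G v f0) (psiF x) = fst (rng (Rcol M2 (v,1) (Inl (f0,1))) x) \<and>
       src (Rcol G v f0) (psiF x) = fst (src (Rcol M2 (v,1) (Inl (f0,1))) x)"
    proof cases
      case a
      have "rng G e \<noteq> v" "src G e \<noteq> v" using fK[OF a(1)] by auto
      thus ?thesis using a(2) by (simp add: Rcol_def insplit_def psiF_def)
    next
      case b
      have "rng G e = v" "src G e \<noteq> v" using fI b(1) by auto
      thus ?thesis using b(2) f0 by (simp add: Rcol_def insplit_def psiF_def)
    next
      case c
      have "rng G e = v" "src G e \<noteq> v" using fI c(1) by auto
      thus ?thesis using c(2) f0 by (simp add: Rcol_def insplit_def psiF_def)
    qed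
  qed
  show ?thesis unfolding isoby_def using be bv ek by blast
qed

end


lemma inj_prod_nat:
  assumes "infinite (UNIV :: 'a set)"
  shows "\<exists>f :: 'a \<times> nat \<Rightarrow> 'a. inj f"
proof -
  have "ordLeq3 (card_of (UNIV::nat set)) (card_of (UNIV::'a set))"
    using assms infinite_iff_card_of_nat by blast
  hence "ordIso2 (card_of ((UNIV::'a set) \<times> (UNIV::nat set))) (card_of (UNIV::'a set))"
    using card_of_Times_infinite[of "UNIV::'a set" "UNIV::nat set"] assms by auto
  hence "ordLeq3 (card_of ((UNIV::'a set) \<times> (UNIV::nat set))) (card_of (UNIV::'a set))"
    using ordIso_iff_ordLeq by blast
  then obtain f :: "'a \<times> nat \<Rightarrow> 'a" where "inj_on f (UNIV \<times> UNIV)"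
    using card_of_ordLeq[of "UNIV \<times> UNIV" "UNIV::'a set"] by blast
  thus ?thesis by auto
qed

lemma move_equiv_step2:
  assumes "move_step G G1" "move_step G1 G2" "move_equiv G2 E"
  shows "move_equiv G E"
proof -
  have a: "(sup move_step move_step\<inverse>\<inverse>)\<^sup>*\<^sup>* G2 E" using assms(3) unfolding move_equiv_def by auto
  have b: "(sup move_step move_step\<inverse>\<inverse>) G1 G2" "(sup move_step move_step\<inverse>\<inverse>) G G1" using assms(1,2) by auto
  have "(sup move_step move_step\<inverse>\<inverse>)\<^sup>*\<^sup>* G E"
    using converse_rtranclp_into_rtranclp[OF b(2) converse_rtranclp_into_rtranclp[OF b(1) a]] .
  thus ?thesis using assms unfolding move_equiv_def move_step_def by auto
qed

lemma main_ind:
  fixes G :: "('v, 'e) dgraph" and E :: "('v, 'e) dgraph"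
  assumes iv: "infinite (UNIV :: 'v set)" and ie: "infinite (UNIV :: 'e set)"
  shows "Ghyp G v f0 \<Longrightarrow> card (src G ` in_edges G v) = k \<Longrightarrow> fin_graph E \<Longrightarrow>
    graph_iso (Rcol G v f0) E \<Longrightarrow> move_equiv G E"
proof (induction k arbitrary: G v f0 rule: less_induct)
  case (less k)
  have fG: "fin_graph G" using less.prems(1) unfolding Ghyp_def fin_graph_def by auto
  have k1: "k \<ge> 1" using less.prems(1,2) Ghyp_basic(7,10)[OF less.prems(1)]
  proof -
    have "src G ` in_edges G v \<noteq> {}" using Ghyp_basic(7)[OF less.prems(1)] by simp
    hence "card (src G ` in_edges G v) > 0" using Ghyp_basic(10)[OF less.prems(1)] card_gt_0_iff by blast
    thus ?thesis using less.prems(2) by simp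
  qed
  show ?case
  proof (cases "k = 1")
    case True
    have "move_R G v (Rcol G v f0)" using Rcol_move[OF less.prems(1)] less.prems(2) True by simp
    hence ex: "\<exists>u M. move_R G u M \<and> graph_iso M E" using less.prems(4) by blast
    have "move_step G E" unfolding move_step_def using fG less.prems(3) ex by blast
    thus ?thesis unfolding move_equiv_def using fG less.prems by auto
  next
    case False
    hence c2: "card (src G ` in_edges G v) \<ge> 2" using k1 less.prems(2) by linarith
    then obtain w where wS: "w \<in> src G ` in_edges G v" by fastforce
    note gh = less.prems(1)
    let ?P = "\<lambda>e. if src G e = w then 0 else 1::nat"
    let ?M1 = "insplit G v ?P"
    let ?M2 = "Rcol ?M1 (v,0) (f0,0)"
    obtain f1 :: "'v \<times> nat \<Rightarrow> 'v" where f1: "inj f1" using inj_prod_nat[OF iv] by blast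
    obtain g1 :: "'e \<times> nat \<Rightarrow> 'e" where g1: "inj g1" using inj_prod_nat[OF ie] by blast
    define G1 where "G1 = imgG f1 g1 ?M1"
    have M1g: "Ghyp ?M1 (v,0) (f0,0)" by (rule M1_Ghyp[OF gh wS c2])
    have M1f: "fin_graph ?M1" by (rule M1_fin[OF gh wS c2])
    have i1: "isoby ?M1 G1 f1 g1" "fin_graph G1" unfolding G1_def using imgG_iso[OF M1f f1 g1] by auto
    have gi1: "graph_iso ?M1 G1" unfolding graph_iso_iff using i1(1) by blast
    have ex1: "\<exists>v n P M. move_I G v n P M \<and> graph_iso M G1" using M1_move[OF gh wS c2] gi1 by blast
    have s1: "move_step G G1" unfolding move_step_def using fG i1(2) ex1 by blast
    define x where "x = f1 (v,0)"
    define y where "y = g1 (f0,0)"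
    have G1g: "Ghyp G1 x y" unfolding x_def y_def by (rule isoby_Ghyp[OF i1(1) M1g])
    have M1b: "is_graph ?M1" "(v,0) \<in> verts ?M1" "(f0,0) \<in> edges ?M1" using Ghyp_basic[OF M1g] by auto
    have "card (src G1 ` in_edges G1 x) = 1" unfolding x_def
      using isoby_card_sources[OF i1(1) M1b(1,2)] M1_card[OF gh wS c2] by simp
    hence mR: "move_R G1 x (Rcol G1 x y)" by (rule Rcol_move[OF G1g])
    define h :: "'e + 'e \<Rightarrow> 'e" where "h = case_sum (\<lambda>e. g1 (e,0)) (\<lambda>e. g1 (e,1))"
    have hi: "inj h" unfolding inj_def
    proof (intro allI impI)
      fix a b assume "h a = h b"
      thus "a = b" unfolding h_def by (cases a; cases b) (simp_all add: inj_eq[OF g1])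
    qed
    define G2 where "G2 = imgG id h (Rcol G1 x y)"
    have Rf: "fin_graph (Rcol G1 x y)" by (rule Rcol_fin[OF G1g])
    have i2: "isoby (Rcol G1 x y) G2 id h" "fin_graph G2" unfolding G2_def using imgG_iso[OF Rf inj_on_id hi] by auto
    have gi2: "graph_iso (Rcol G1 x y) G2" unfolding graph_iso_iff using i2(1) by blast
    have ex2: "\<exists>u M. move_R G1 u M \<and> graph_iso M G2" using mR gi2 by blast
    have s2: "move_step G1 G2" unfolding move_step_def using i1(2) i2(2) ex2 by blast
    have i3: "isoby ?M2 (Rcol G1 x y) f1 (map_sum g1 g1)" unfolding x_def y_def
      by (rule Rcol_iso[OF i1(1) M1b])
    have i4: "isoby ?M2 G2 (id \<circ> f1) (h \<circ> map_sum g1 g1)" by (rule isoby_trans[OF i3 i2(1)])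
    define \<alpha> where "\<alpha> = id \<circ> f1"
    define \<beta> where "\<beta> = h \<circ> map_sum g1 g1"
    have M2g: "Ghyp ?M2 (v,1) (Inl (f0,1))" by (rule M2_Ghyp[OF gh wS c2])
    have M2b: "is_graph ?M2" "(v,1) \<in> verts ?M2" "Inl (f0,1) \<in> edges ?M2" using Ghyp_basic[OF M2g] by auto
    have G2g: "Ghyp G2 (\<alpha> (v,1)) (\<beta> (Inl (f0,1)))" unfolding \<alpha>_def \<beta>_def by (rule isoby_Ghyp[OF i4 M2g])
    have cG2: "card (src G2 ` in_edges G2 (\<alpha> (v,1))) = k - 1" unfolding \<alpha>_def
      using isoby_card_sources[OF i4 M2b(1,2)] M2_card[OF gh wS c2] less.prems(2) by simp
    have i5: "isoby (Rcol ?M2 (v,1) (Inl (f0,1))) (Rcol G2 (\<alpha> (v,1)) (\<beta> (Inl (f0,1)))) \<alpha> (map_sum \<beta> \<beta>)"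
      unfolding \<alpha>_def \<beta>_def by (rule Rcol_iso[OF i4 M2b])
    have RM2g: "is_graph (Rcol ?M2 (v,1) (Inl (f0,1)))" using Rcol_fin[OF M2g] unfolding fin_graph_def by auto
    have j1: "graph_iso (Rcol G2 (\<alpha> (v,1)) (\<beta> (Inl (f0,1)))) (Rcol ?M2 (v,1) (Inl (f0,1)))"
    proof -
      have "graph_iso (Rcol ?M2 (v,1) (Inl (f0,1))) (Rcol G2 (\<alpha> (v,1)) (\<beta> (Inl (f0,1))))"
        unfolding graph_iso_iff using i5 by blast
      thus ?thesis by (rule graph_iso_sym[OF _ RM2g])
    qed
    have j2: "graph_iso (Rcol ?M2 (v,1) (Inl (f0,1))) (Rcol G v f0)"
      using final_iso[OF gh wS c2] unfolding graph_iso_iff by blast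
    have gF: "graph_iso (Rcol G2 (\<alpha> (v,1)) (\<beta> (Inl (f0,1)))) E"
      by (rule graph_iso_trans[OF graph_iso_trans[OF j1 j2] less.prems(4)])
    have kl: "k - 1 < k" using k1 by simp
    have "move_equiv G2 E" by (rule less.IH[OF kl G2g cG2 less.prems(3) gF])
    thus ?thesis using move_equiv_step2[OF s1 s2] by blast
  qed
qed



theorem lemma5p1:
  fixes G E :: "('v, 'e) dgraph" and v :: 'v and f0 :: 'e and c :: "'e \<Rightarrow> 'e"
  assumes "infinite (UNIV :: 'v set)" and "infinite (UNIV :: 'e set)"
    and "is_graph G" and "finite (verts G)"
    and "v \<in> verts G" and "regular G v" and "\<not> is_source G v"
    and "out_edges G v = {f0}" and "rng G f0 \<noteq> v"
    and "inj_on c (in_edges G v)"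
    and "c ` in_edges G v \<inter> (edges G - (in_edges G v \<union> out_edges G v)) = {}"
    and "verts E = verts G - {v}"
    and "edges E = (edges G - (in_edges G v \<union> out_edges G v)) \<union> c ` in_edges G v"
    and "\<forall>e \<in> edges G - (in_edges G v \<union> out_edges G v). rng E e = rng G e \<and> src E e = src G e"
    and "\<forall>e \<in> in_edges G v. rng E (c e) = rng G f0 \<and> src E (c e) = src G e"
  shows "move_equiv G E"
proof -
  have gh: "Ghyp G v f0" unfolding Ghyp_def using assms by auto
  let ?K = "edges G - in_edges G v - {f0}"
  have K: "edges G - (in_edges G v \<union> out_edges G v) = ?K" using assms(8) by blast
  have bv: "bij_betw id (verts (Rcol G v f0)) (verts E)" using assms(12) by (simp add: Rcol_def)
  have be: "bij_betw (case_sum id c) (edges (Rcol G v f0)) (edges E)"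
  proof -
    have eR: "edges (Rcol G v f0) = Inl ` ?K \<union> Inr ` in_edges G v" by (simp add: Rcol_def)
    have inj: "inj_on (case_sum id c) (Inl ` ?K \<union> Inr ` in_edges G v)" unfolding inj_on_def
    proof (intro ballI impI)
      fix a b assume a: "a \<in> Inl ` ?K \<union> Inr ` in_edges G v" and b: "b \<in> Inl ` ?K \<union> Inr ` in_edges G v"
        and e: "case_sum id c a = case_sum id c b"
      from a b e show "a = b"
      proof (elim UnE imageE)
        fix x y assume "x \<in> ?K" "y \<in> in_edges G v" "a = Inl x" "b = Inr y" "case_sum id c a = case_sum id c b"
        hence "x = c y" "x \<in> ?K" "y \<in> in_edges G v" by auto
        thus "a = b" using assms(11) K by blast
      next
        fix x y assume "x \<in> ?K" "y \<in> in_edges G v" "a = Inr y" "b = Inl x" "case_sum id c a = case_sum id c b"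
        hence "x = c y" "x \<in> ?K" "y \<in> in_edges G v" by auto
        thus "a = b" using assms(11) K by blast
      next
        fix x y assume "x \<in> in_edges G v" "y \<in> in_edges G v" "a = Inr x" "b = Inr y" "case_sum id c a = case_sum id c b"
        thus "a = b" using assms(10) by (simp add: inj_on_eq_iff)
      qed simp
    qed
    have "case_sum id c ` (Inl ` ?K \<union> Inr ` in_edges G v) = ?K \<union> c ` in_edges G v"
      by (simp add: image_Un image_image)
    thus ?thesis using inj unfolding bij_betw_def eR assms(13) K by simp
  qed
  have cond: "\<forall>e\<in>edges (Rcol G v f0). rng E (case_sum id c e) = id (rng (Rcol G v f0) e) \<and>
      src E (case_sum id c e) = id (src (Rcol G v f0) e)"
  proof
    fix e assume "e \<in> edges (Rcol G v f0)"
    hence "e \<in> Inl ` ?K \<union> Inr ` in_edges G v" by (simp add: Rcol_def)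
    thus "rng E (case_sum id c e) = id (rng (Rcol G v f0) e) \<and> src E (case_sum id c e) = id (src (Rcol G v f0) e)"
    proof (elim UnE imageE)
      fix x assume "x \<in> ?K" "e = Inl x"
      thus ?thesis using assms(14) K by (simp add: Rcol_def)
    next
      fix x assume "x \<in> in_edges G v" "e = Inr x"
      thus ?thesis using assms(15) by (simp add: Rcol_def)
    qed
  qed
  have iso: "isoby (Rcol G v f0) E id (case_sum id c)" unfolding isoby_def using bv be cond by blast
  have fE: "fin_graph E" by (rule isoby_fin_graph[OF iso Rcol_fin[OF gh]])
  have gi: "graph_iso (Rcol G v f0) E" unfolding graph_iso_iff using iso by blast
  show ?thesis by (rule main_ind[OF assms(1,2) gh refl fE gi])
qed

end
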